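(* If $\Gamma$ is a graph of order $n$ and minimum degree $\delta>0$, then $\gamma_0^o(\Gamma)\le\frac{n}{2}$.
   Context: Graphs are finite and simple. For $S\subseteq V$ and $v\in V$, $\delta_S(v)$ is the number of neighbours of $v$ in $S$, $\overline{S}=V\setminus S$, and $\partial(S)$ the set of vertices of $\overline{S}$ with a neighbour in $S$. A nonempty $S$ is an offensive $0$-alliance if $\delta_S(v)\ge\delta_{\overline{S}}(v)$ for all $v\in\partial(S)$, and a global offensive $0$-alliance if moreover it is dominating. $\gamma_0^o(\Gamma)$ denotes the minimum cardinality of a global offensive $0$-alliance in $\Gamma$. *)

theory Defs
  imports Complex_Main
begin

definition simple_graph :: "'a set \<Rightarrow> ('a \<Rightarrow> 'a \<Rightarrow> bool) \<Rightarrow> bool" where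
  "simple_graph V E \<longleftrightarrow> finite V \<and> (\<forall>u v. E u v \<longrightarrow> u \<in> V \<and> v \<in> V)
     \<and> (\<forall>u v. E u v \<longrightarrow> E v u) \<and> (\<forall>v. \<not> E v v)"

definition neighbours :: "'a set \<Rightarrow> ('a \<Rightarrow> 'a \<Rightarrow> bool) \<Rightarrow> 'a \<Rightarrow> 'a set" where
  "neighbours V E v = {u \<in> V. E v u}"

definition degree :: "'a set \<Rightarrow> ('a \<Rightarrow> 'a \<Rightarrow> bool) \<Rightarrow> 'a \<Rightarrow> nat" where
  "degree V E v = card (neighbours V E v)"

definition min_degree :: "'a set \<Rightarrow> ('a \<Rightarrow> 'a \<Rightarrow> bool) \<Rightarrow> nat" where
  "min_degree V E = Min (degree V E ` V)"

definition delta_in :: "'a set \<Rightarrow> ('a \<Rightarrow> 'a \<Rightarrow> bool) \<Rightarrow> 'a set \<Rightarrow> 'a \<Rightarrow> nat" where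
  "delta_in V E S v = card (neighbours V E v \<inter> S)"

definition boundary :: "'a set \<Rightarrow> ('a \<Rightarrow> 'a \<Rightarrow> bool) \<Rightarrow> 'a set \<Rightarrow> 'a set" where
  "boundary V E S = {v \<in> V - S. \<exists>u \<in> S. E v u}"

definition offensive_0_alliance :: "'a set \<Rightarrow> ('a \<Rightarrow> 'a \<Rightarrow> bool) \<Rightarrow> 'a set \<Rightarrow> bool" where
  "offensive_0_alliance V E S \<longleftrightarrow> S \<noteq> {} \<and> S \<subseteq> V \<and>
     (\<forall>v \<in> boundary V E S. delta_in V E S v \<ge> delta_in V E (V - S) v)"

definition dominating :: "'a set \<Rightarrow> ('a \<Rightarrow> 'a \<Rightarrow> bool) \<Rightarrow> 'a set \<Rightarrow> bool" where
  "dominating V E S \<longleftrightarrow> S \<subseteq> V \<and> (\<forall>v \<in> V - S. \<exists>u \<in> S. E v u)"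

definition global_offensive_0_alliance :: "'a set \<Rightarrow> ('a \<Rightarrow> 'a \<Rightarrow> bool) \<Rightarrow> 'a set \<Rightarrow> bool" where
  "global_offensive_0_alliance V E S \<longleftrightarrow> offensive_0_alliance V E S \<and> dominating V E S"

definition gamma_o_0 :: "'a set \<Rightarrow> ('a \<Rightarrow> 'a \<Rightarrow> bool) \<Rightarrow> nat" where
  "gamma_o_0 V E = Min (card ` {S. global_offensive_0_alliance V E S})"

end

theory Submission
  imports Defs
begin

definition cutv :: "'a set \<Rightarrow> ('a \<Rightarrow> 'a \<Rightarrow> bool) \<Rightarrow> 'a set \<Rightarrow> nat" where
  "cutv V E S = (\<Sum>u\<in>S. card (neighbours V E u \<inter> (V - S)))"

lemma nb_finite: "simple_graph V E \<Longrightarrow> finite (neighbours V E u)"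
  unfolding simple_graph_def neighbours_def by auto

lemma cut_rem:
  assumes g: "simple_graph V E" and S: "S \<subseteq> V" and v: "v \<in> S"
  shows "int (cutv V E (S - {v})) = int (cutv V E S) - int (card (neighbours V E v \<inter> (V - S)))
           + int (card (neighbours V E v \<inter> S))"
proof -
  have fV: "finite V" using g simple_graph_def by auto
  have fS: "finite S" using S fV finite_subset by blast
  let ?N = "neighbours V E"
  have eq1: "\<And>u. u \<in> S - {v} \<Longrightarrow> card (?N u \<inter> (V - (S - {v}))) = card (?N u \<inter> (V - S)) + (if E u v then 1 else 0)"
  proof -
    fix u assume u: "u \<in> S - {v}"
    have fin: "finite (?N u \<inter> (V - S))" using nb_finite[OF g] by auto
    show "card (?N u \<inter> (V - (S - {v}))) = card (?N u \<inter> (V - S)) + (if E u v then 1 else 0)"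
    proof (cases "E u v")
      case True
      have "?N u \<inter> (V - (S - {v})) = insert v (?N u \<inter> (V - S))"
        using True v S unfolding neighbours_def by auto
      then show ?thesis using True fin v by simp
    next
      case False
      have "?N u \<inter> (V - (S - {v})) = ?N u \<inter> (V - S)"
        using False v S unfolding neighbours_def by auto
      then show ?thesis using False by simp
    qed
  qed
  have "cutv V E (S - {v}) = (\<Sum>u\<in>S - {v}. card (?N u \<inter> (V - S)) + (if E u v then 1 else 0))"
    unfolding cutv_def using eq1 by (rule sum.cong[OF refl])
  also have "\<dots> = (\<Sum>u\<in>S - {v}. card (?N u \<inter> (V - S))) + card {u \<in> S - {v}. E u v}"
    using fS by (simp add: sum.distrib sum.If_cases) (rule arg_cong[where f=card], blast)
  also have "{u \<in> S - {v}. E u v} = ?N v \<inter> S"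
    using g S unfolding simple_graph_def neighbours_def by auto
  finally have a: "cutv V E (S - {v}) = (\<Sum>u\<in>S - {v}. card (?N u \<inter> (V - S))) + card (?N v \<inter> S)" .
  have b: "cutv V E S = card (?N v \<inter> (V - S)) + (\<Sum>u\<in>S - {v}. card (?N u \<inter> (V - S)))"
    unfolding cutv_def using fS v by (simp add: sum.remove)
  show ?thesis using a b by simp
qed

lemma cut_add:
  assumes g: "simple_graph V E" and S: "S \<subseteq> V" and v: "v \<in> V - S"
  shows "int (cutv V E (insert v S)) = int (cutv V E S) - int (card (neighbours V E v \<inter> S))
           + int (card (neighbours V E v \<inter> (V - S)))"
proof -
  have fV: "finite V" using g simple_graph_def by auto
  have fS: "finite S" using S fV finite_subset by blast
  let ?N = "neighbours V E"
  have eq1: "\<And>u. u \<in> S \<Longrightarrow> int (card (?N u \<inter> (V - insert v S))) = int (card (?N u \<inter> (V - S))) - (if E u v then 1 else 0)"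
  proof -
    fix u assume u: "u \<in> S"
    have fin: "finite (?N u \<inter> (V - S))" using nb_finite[OF g] by auto
    have st: "?N u \<inter> (V - insert v S) = (?N u \<inter> (V - S)) - {v}" by blast
    have iff: "v \<in> ?N u \<inter> (V - S) \<longleftrightarrow> E u v" using v unfolding neighbours_def by auto
    show "int (card (?N u \<inter> (V - insert v S))) = int (card (?N u \<inter> (V - S))) - (if E u v then 1 else 0)"
    proof (cases "E u v")
      case True
      then have m: "v \<in> ?N u \<inter> (V - S)" using iff by blast
      then have c1: "card ((?N u \<inter> (V - S)) - {v}) = card (?N u \<inter> (V - S)) - 1"
        by (rule card_Diff_singleton)
      have c2: "card (?N u \<inter> (V - S)) > 0" using m fin card_gt_0_iff by blast
      show ?thesis unfolding st c1 using True c2 by simp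
    next
      case False
      then have "v \<notin> ?N u \<inter> (V - S)" using iff by blast
      then have "(?N u \<inter> (V - S)) - {v} = ?N u \<inter> (V - S)" by blast
      then show ?thesis unfolding st using False by simp
    qed
  qed
  have vn: "v \<notin> S" using v by auto
  have c: "?N v \<inter> (V - insert v S) = ?N v \<inter> (V - S)"
    using g unfolding simple_graph_def neighbours_def by auto
  have "int (cutv V E (insert v S)) = int (card (?N v \<inter> (V - S))) + (\<Sum>u\<in>S. int (card (?N u \<inter> (V - insert v S))))"
    unfolding cutv_def using fS vn c by simp
  also have "(\<Sum>u\<in>S. int (card (?N u \<inter> (V - insert v S)))) = (\<Sum>u\<in>S. int (card (?N u \<inter> (V - S))) - (if E u v then 1 else 0))"
    using eq1 by (rule sum.cong[OF refl])
  also have "\<dots> = (\<Sum>u\<in>S. int (card (?N u \<inter> (V - S)))) - int (card {u \<in> S. E u v})"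
    using fS by (simp add: sum_subtractf sum.If_cases) (rule arg_cong[where f=card], blast)
  also have "{u \<in> S. E u v} = ?N v \<inter> S"
    using g S unfolding simple_graph_def neighbours_def by auto
  finally show ?thesis unfolding cutv_def by simp
qed

theorem mainTheorem7:
  fixes V :: "'a set" and E :: "'a \<Rightarrow> 'a \<Rightarrow> bool"
  assumes "simple_graph V E"
    and "V \<noteq> {}"
    and "min_degree V E > 0"
  shows "real (gamma_o_0 V E) \<le> real (card V) / 2"
proof -
  note g = assms(1)
  have fV: "finite V" using g simple_graph_def by auto
  let ?N = "neighbours V E"
  have deg: "\<And>v. v \<in> V \<Longrightarrow> ?N v \<noteq> {}"
  proof -
    fix v assume v: "v \<in> V"
    have "min_degree V E \<le> degree V E v" unfolding min_degree_def using fV v by auto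
    then have "card (?N v) > 0" using assms(3) unfolding degree_def by simp
    then show "?N v \<noteq> {}" by auto
  qed
  have nsub: "\<And>v. ?N v \<subseteq> V" unfolding neighbours_def by auto
  define m where "m = Max (cutv V E ` Pow V)"
  have "m \<in> cutv V E ` Pow V" unfolding m_def using fV by (intro Max_in) auto
  then obtain S where S: "S \<subseteq> V" and mS: "cutv V E S = m" by auto
  have mx: "\<And>T. T \<subseteq> V \<Longrightarrow> cutv V E T \<le> m" unfolding m_def using fV by auto
  have inS: "\<And>v. v \<in> S \<Longrightarrow> card (?N v \<inter> S) \<le> card (?N v \<inter> (V - S))"
  proof -
    fix v assume v: "v \<in> S"
    have "cutv V E (S - {v}) \<le> cutv V E S" using mx[of "S - {v}"] S mS by auto
    then show "card (?N v \<inter> S) \<le> card (?N v \<inter> (V - S))" using cut_rem[OF g S v] by linarith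
  qed
  have outS: "\<And>v. v \<in> V - S \<Longrightarrow> card (?N v \<inter> (V - S)) \<le> card (?N v \<inter> S)"
  proof -
    fix v assume v: "v \<in> V - S"
    have "cutv V E (insert v S) \<le> cutv V E S" using mx[of "insert v S"] S mS v by auto
    then show "card (?N v \<inter> (V - S)) \<le> card (?N v \<inter> S)" using cut_add[OF g S v] by linarith
  qed
  have split: "\<And>v. ?N v = (?N v \<inter> S) \<union> (?N v \<inter> (V - S))" using nsub by blast
  have finN: "\<And>v. finite (?N v)" using nb_finite[OF g] .
  have domS: "\<And>v. v \<in> V - S \<Longrightarrow> ?N v \<inter> S \<noteq> {}"
  proof
    fix v assume v: "v \<in> V - S" and e: "?N v \<inter> S = {}"
    then have "card (?N v \<inter> (V - S)) = 0" using outS[OF v] by simp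
    then have "?N v \<inter> (V - S) = {}" using finN[of v] by simp
    then show False using split[of v] e deg[of v] v by auto
  qed
  have domT: "\<And>v. v \<in> S \<Longrightarrow> ?N v \<inter> (V - S) \<noteq> {}"
  proof
    fix v assume v: "v \<in> S" and e: "?N v \<inter> (V - S) = {}"
    then have "card (?N v \<inter> S) = 0" using inS[OF v] by simp
    then have "?N v \<inter> S = {}" using finN[of v] by simp
    then show False using split[of v] e deg[of v] v S by auto
  qed
  obtain w where w: "w \<in> V" using assms(2) by auto
  have Sne: "S \<noteq> {}"
  proof
    assume "S = {}" then show False using domS[of w] w by auto
  qed
  have Tne: "V - S \<noteq> {}"
  proof
    assume e: "V - S = {}" then have "w \<in> S" using w by auto
    then show False using domT[of w] e by auto
  qed
  have gS: "global_offensive_0_alliance V E S"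
    unfolding global_offensive_0_alliance_def offensive_0_alliance_def dominating_def delta_in_def boundary_def
    using Sne S outS domS unfolding neighbours_def by auto
  have VT: "V - (V - S) = S" using S by auto
  have gT: "global_offensive_0_alliance V E (V - S)"
    unfolding global_offensive_0_alliance_def offensive_0_alliance_def dominating_def delta_in_def boundary_def VT
    using Tne inS domT S unfolding neighbours_def by auto
  have fin: "finite (card ` {S. global_offensive_0_alliance V E S})"
  proof (rule finite_subset)
    show "card ` {S. global_offensive_0_alliance V E S} \<subseteq> card ` Pow V"
      unfolding global_offensive_0_alliance_def offensive_0_alliance_def by auto
    show "finite (card ` Pow V)" using fV by simp
  qed
  have g1: "gamma_o_0 V E \<le> card S" unfolding gamma_o_0_def using fin gS by (intro Min_le) auto
  have g2: "gamma_o_0 V E \<le> card (V - S)" unfolding gamma_o_0_def using fin gT by (intro Min_le) auto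
  have "card S + card (V - S) = card V" using S fV by (metis card_Diff_subset finite_subset card_mono le_add_diff_inverse)
  then show ?thesis using g1 g2 by linarith
qed

end
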